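(* Fix an integer $d\ge1$. For every $l>0$ there is a constant $C(l)>0$, depending only on $l$ and $d$ and not on $n$, such that for every $x\in\mathbb{R}^n$ whose Euclidean distance to each of the three points $0$, $e_1$, and $-\cos(g^{\circ d}(\pi))\,e_1$ is at least $l$, and at which $L$ is differentiable, $\|\nabla L(x)\|\ge C(l)$.
   Context: $e_1=(1,0,\dots,0)\in\mathbb{R}^n$; for $x\neq0$, $\theta(x)\in[0,\pi]$ is the angle between $x$ and $e_1$. $g(\theta)=\arccos\big(\frac{(\pi-\theta)\cos\theta+\sin\theta}{\pi}\big)$, $g^{\circ d}$ its $d$-fold composition. $L(x)=\frac12\|x\|^2-\|x\|\cos\big(g^{\circ d}(\theta(x))\big)+\frac12$. *)

theory Defs
  imports "HOL-Analysis.Analysis"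
begin

text \<open>The constant C must be independent of the dimension n, so n has to be quantified
inside the formula. We therefore model R^n concretely as the functions nat => real vanishing
outside the first n coordinates (coordinate 0 plays the role of the first coordinate).\<close>

definition Rn :: "nat \<Rightarrow> (nat \<Rightarrow> real) set" where
  "Rn n = {x. \<forall>i\<ge>n. x i = 0}"

definition vinner :: "nat \<Rightarrow> (nat \<Rightarrow> real) \<Rightarrow> (nat \<Rightarrow> real) \<Rightarrow> real" where
  "vinner n x y = (\<Sum>i<n. x i * y i)"

definition vnorm :: "nat \<Rightarrow> (nat \<Rightarrow> real) \<Rightarrow> real" where
  "vnorm n x = sqrt (\<Sum>i<n. (x i)\<^sup>2)"

definition vdist :: "nat \<Rightarrow> (nat \<Rightarrow> real) \<Rightarrow> (nat \<Rightarrow> real) \<Rightarrow> real" where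
  "vdist n x y = vnorm n (\<lambda>i. x i - y i)"

definition e1 :: "nat \<Rightarrow> real" where
  "e1 = (\<lambda>i. if i = 0 then 1 else 0)"

definition theta :: "nat \<Rightarrow> (nat \<Rightarrow> real) \<Rightarrow> real" where
  "theta n x = arccos (vinner n x e1 / (vnorm n x * vnorm n e1))"

definition g :: "real \<Rightarrow> real" where
  "g \<theta> = arccos (((pi - \<theta>) * cos \<theta> + sin \<theta>) / pi)"

definition L :: "nat \<Rightarrow> nat \<Rightarrow> (nat \<Rightarrow> real) \<Rightarrow> real" where
  "L d n x = (vnorm n x)\<^sup>2 / 2 - vnorm n x * cos ((g ^^ d) (theta n x)) + 1 / 2"

definition has_grad :: "nat \<Rightarrow> ((nat \<Rightarrow> real) \<Rightarrow> real) \<Rightarrow> (nat \<Rightarrow> real) \<Rightarrow> (nat \<Rightarrow> real) \<Rightarrow> bool" where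
  "has_grad n f x G \<longleftrightarrow> G \<in> Rn n \<and>
     (\<forall>\<epsilon>>0. \<exists>\<delta>>0. \<forall>y\<in>Rn n. vdist n y x < \<delta> \<longrightarrow>
        \<bar>f y - f x - vinner n G (\<lambda>i. y i - x i)\<bar> \<le> \<epsilon> * vdist n y x)"

definition differentiable_Rn :: "nat \<Rightarrow> ((nat \<Rightarrow> real) \<Rightarrow> real) \<Rightarrow> (nat \<Rightarrow> real) \<Rightarrow> bool" where
  "differentiable_Rn n f x \<longleftrightarrow> (\<exists>G. has_grad n f x G)"

end

theory Submission imports Defs begin


definition ff :: "real \<Rightarrow> real" where
  "ff t = ((pi - t) * cos t + sin t) / pi"

definition gd :: "real \<Rightarrow> real" where
  "gd t = inverse (- sqrt (1 - (ff t)\<^sup>2)) * (- (pi - t) * sin t / pi)"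

lemma g_ff: "g t = arccos (ff t)"
  by (simp add: g_def ff_def)

lemma ff_lt1: assumes "0 < t" "t \<le> pi" shows "ff t < 1"
proof -
  have id: "pi * (1 - ff t) = (pi - t) * (1 - cos t) + (t - sin t)"
    by (simp add: ff_def field_simps)
  have "t - sin t \<ge> 0" using sin_x_le_x[of t] assms by simp
  moreover have "(pi - t) * (1 - cos t) + (t - sin t) > 0"
  proof (cases "t < pi")
    case True
    have "cos t < cos 0" by (rule cos_monotone_0_pi) (use assms in auto)
    hence "(pi - t) * (1 - cos t) > 0" using True by simp
    thus ?thesis using \<open>t - sin t \<ge> 0\<close> by linarith
  next
    case False
    hence "t = pi" using assms by simp
    thus ?thesis by simp
  qed
  ultimately have "pi * (1 - ff t) > 0" using id by simp
  thus ?thesis by (simp add: zero_less_mult_iff)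
qed

lemma ff_gt: assumes "0 < t" "t \<le> pi" shows "ff t > -1"
proof -
  have "pi * ff t + pi = (pi - t) * cos t + sin t + pi" by (simp add: ff_def field_simps)
  moreover have "(pi - t) * cos t \<ge> (pi - t) * (-1)"
    by (rule mult_left_mono) (use assms in auto)
  moreover have "sin t \<ge> 0" using assms by (simp add: sin_ge_zero)
  moreover have "(pi - t) * (-1) = t - pi" by simp
  ultimately have "pi * ff t + pi > 0" using assms by linarith
  hence "pi * (ff t + 1) > 0" by (simp add: algebra_simps)
  thus ?thesis by (simp add: zero_less_mult_iff)
qed

lemma ff_le1: assumes "0 \<le> t" "t \<le> pi" shows "ff t \<le> 1"
  using ff_lt1[of t] assms by (cases "t = 0") (auto simp: ff_def)

lemma ff_ge: assumes "0 \<le> t" "t \<le> pi" shows "ff t \<ge> -1"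
  using ff_gt[of t] assms by (cases "t = 0") (auto simp: ff_def)

lemma sin_ge_xcos: assumes "0 \<le> t" "t \<le> pi" shows "t * cos t \<le> sin t"
proof -
  let ?k = "\<lambda>x. sin x - x * cos x"
  have "?k 0 \<le> ?k t"
  proof (rule DERIV_nonneg_imp_nondecreasing[OF assms(1)])
    fix x assume x: "0 \<le> x" "x \<le> t"
    have "(?k has_real_derivative x * sin x) (at x)"
      by (auto intro!: derivative_eq_intros simp: field_simps)
    moreover have "x * sin x \<ge> 0" using x assms by (simp add: sin_ge_zero)
    ultimately show "\<exists>y. DERIV ?k x :> y \<and> y \<ge> 0" by blast
  qed
  thus ?thesis by simp
qed

lemma ff_ge_cos: assumes "0 \<le> t" "t \<le> pi" shows "cos t \<le> ff t"
proof -
  have "pi * ff t = pi * cos t + (sin t - t * cos t)" by (simp add: ff_def field_simps)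
  hence "pi * ff t \<ge> pi * cos t" using sin_ge_xcos[OF assms] by linarith
  thus ?thesis by simp
qed

lemma g_bounds: assumes "0 < t" "t \<le> pi" shows "0 < g t \<and> g t < pi"
  using arccos_lt_bounded[OF ff_gt[OF assms] ff_lt1[OF assms]] by (simp add: g_ff)

lemma g_le: assumes "0 \<le> t" "t \<le> pi" shows "0 \<le> g t \<and> g t \<le> t"
proof -
  have "g t \<ge> 0" using arccos_bounded[OF ff_ge[OF assms] ff_le1[OF assms]] by (simp add: g_ff)
  moreover have "arccos (ff t) \<le> arccos (cos t)"
    by (rule arccos_le_arccos) (use ff_ge_cos[OF assms] ff_le1[OF assms] in auto)
  ultimately show ?thesis using arccos_cos[OF assms] by (simp add: g_ff)
qed

lemma g_deriv: assumes "0 < t" "t \<le> pi" shows "(g has_real_derivative gd t) (at t)"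
proof -
  have "(ff has_real_derivative (- (pi - t) * sin t / pi)) (at t)"
    unfolding ff_def[abs_def] by (auto intro!: derivative_eq_intros simp: field_simps)
  from DERIV_chain2[OF DERIV_arccos[OF ff_gt[OF assms] ff_lt1[OF assms]] this]
  show ?thesis unfolding gd_def g_ff[abs_def] by simp
qed

lemma gd_pos: assumes "0 < t" "t < pi" shows "gd t > 0"
proof -
  have "(ff t)\<^sup>2 < 1" using ff_gt[of t] ff_lt1[of t] assms
    by (simp add: abs_square_less_1)
  hence s: "sqrt (1 - (ff t)\<^sup>2) > 0" by simp
  have "(pi - t) * sin t > 0" using assms by (simp add: sin_gt_zero)
  hence "- (pi - t) * sin t < 0" by (smt (verit) mult_minus_left)
  hence "- (pi - t) * sin t / pi < 0" by (simp add: divide_neg_pos)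
  moreover have "inverse (- sqrt (1 - (ff t)\<^sup>2)) < 0" using s by simp
  ultimately show ?thesis unfolding gd_def by (simp only: mult_neg_neg)
qed

lemma gd_cont: assumes "0 < t" "t \<le> pi" shows "isCont gd t"
proof -
  have "(ff t)\<^sup>2 < 1" using ff_gt[of t] ff_lt1[of t] assms
    by (simp add: abs_square_less_1)
  hence s: "sqrt (1 - (ff t)\<^sup>2) > 0" by simp
  show ?thesis unfolding gd_def ff_def[abs_def]
    using s unfolding ff_def by (auto intro!: continuous_intros)
qed

lemma gpow_bounds: assumes "0 < t" "t \<le> pi" shows "0 < (g^^k) t \<and> (g^^k) t \<le> pi"
proof (induction k)
  case (Suc k)
  then show ?case using g_bounds[of "(g^^k) t"] by auto
qed (use assms in auto)

lemma gpow_bounds': assumes "0 < t" "t < pi" shows "0 < (g^^k) t \<and> (g^^k) t < pi"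
  by (induction k) (use assms g_bounds in auto)

lemma gpow_le: assumes "0 \<le> t" "t \<le> pi" shows "0 \<le> (g^^k) t \<and> (g^^k) t \<le> t"
proof (induction k)
  case (Suc k)
  then show ?case using g_le[of "(g^^k) t"] assms by auto
qed (use assms in auto)

definition HH :: "nat \<Rightarrow> real \<Rightarrow> real" where
  "HH k t = (\<Prod>j<k. gd ((g^^j) t))"

lemma gpow_deriv: assumes "0 < t" "t \<le> pi" shows "((g^^k) has_real_derivative HH k t) (at t)"
proof (induction k)
  case 0
  then show ?case by (simp add: HH_def)
next
  case (Suc k)
  have b: "0 < (g^^k) t" "(g^^k) t \<le> pi" using gpow_bounds[OF assms] by auto
  from DERIV_chain2[OF g_deriv[OF b] Suc]
  show ?case by (simp add: HH_def mult.commute)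
qed

lemma HH_pos: assumes "0 < t" "t < pi" shows "HH k t > 0"
  unfolding HH_def by (rule prod_pos) (use gpow_bounds'[OF assms] gd_pos in auto)

lemma HH_cont: assumes "0 < t" "t < pi" shows "isCont (HH k) t"
  unfolding HH_def
proof (intro continuous_intros)
  fix j
  have "isCont (g^^j) t" using DERIV_isCont[OF gpow_deriv] assms by simp
  moreover have "isCont gd ((g^^j) t)" using gd_cont gpow_bounds'[OF assms, of j] by simp
  ultimately show "isCont (\<lambda>t. gd ((g^^j) t)) t" by (rule isCont_o2)
qed

lemma isCont_eps: fixes f :: "real \<Rightarrow> real"
  assumes "isCont f a" "e > 0" shows "\<exists>s>0. \<forall>x. \<bar>x - a\<bar> < s \<longrightarrow> \<bar>f x - f a\<bar> < e"
proof -
  from assms(1)[unfolded isCont_def LIM_eq] assms(2) obtain s where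
    "s > 0" "\<forall>x. x \<noteq> a \<and> norm (x - a) < s \<longrightarrow> norm (f x - f a) < e" by blast
  thus ?thesis using assms(2) by (metis abs_zero diff_self real_norm_def)
qed

lemma key2d:
  fixes d :: nat and l :: real
  assumes "l > 0"
  defines "c \<equiv> cos ((g^^d) pi)"
  shows "\<exists>C>0. \<forall>r t. r \<ge> l \<longrightarrow> 0 \<le> t \<longrightarrow> t \<le> pi \<longrightarrow>
     r\<^sup>2 - 2 * r * cos t + 1 \<ge> l\<^sup>2 \<longrightarrow> r\<^sup>2 + 2 * c * r * cos t + c\<^sup>2 \<ge> l\<^sup>2 \<longrightarrow>
     (\<bar>r - cos ((g^^d) t)\<bar> \<ge> C \<or> (0 < t \<and> t < pi \<and> sin ((g^^d) t) * HH d t \<ge> C))"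
proof -
  let ?h = "g^^d"
  have l2: "l\<^sup>2 / 16 > 0" "l / 4 > 0" using assms by auto
  have "isCont ?h pi" using DERIV_isCont[OF gpow_deriv[of pi d]] by simp
  hence "isCont (\<lambda>t. cos (?h t)) pi" by (intro continuous_intros)
  from isCont_eps[OF this l2(2)] obtain s1 where s1: "s1 > 0"
    "\<And>t. \<bar>t - pi\<bar> < s1 \<Longrightarrow> \<bar>cos (?h t) - c\<bar> < l/4" unfolding c_def by blast
  from isCont_eps[OF isCont_cos l2(1), of pi] obtain s2 where s2: "s2 > 0"
    "\<And>t. \<bar>t - pi\<bar> < s2 \<Longrightarrow> \<bar>cos t + 1\<bar> < l\<^sup>2/16" by auto
  from isCont_eps[OF isCont_cos, of "min (l/4) (l\<^sup>2/16)" 0] l2 obtain s3 where s3: "s3 > 0"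
    "\<And>t. \<bar>t\<bar> < s3 \<Longrightarrow> \<bar>cos t - 1\<bar> < min (l/4) (l\<^sup>2/16)" by auto
  define \<alpha> where "\<alpha> = min (min s1 s2) (min s3 1) / 2"
  have \<alpha>: "\<alpha> > 0" "\<alpha> < s1" "\<alpha> < s2" "\<alpha> < s3" "\<alpha> \<le> 1/2"
    using s1 s2 s3 by (auto simp: \<alpha>_def)
  have pi3: "pi > 3" by (rule pi_gt3)
  let ?P = "\<lambda>t. sin (?h t) * HH d t"
  have Ppos: "?P t > 0" if "0 < t" "t < pi" for t
  proof -
    have "0 < ?h t" "?h t < pi" using gpow_bounds'[OF that] by auto
    hence "sin (?h t) > 0" by (simp add: sin_gt_zero)
    thus ?thesis using HH_pos[OF that] by simp
  qed
  have "continuous_on {\<alpha>..pi-\<alpha>} ?P"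
  proof (rule continuous_at_imp_continuous_on, rule ballI)
    fix t assume "t \<in> {\<alpha>..pi-\<alpha>}"
    hence t: "0 < t" "t < pi" using \<alpha> by auto
    have "isCont ?h t" using DERIV_isCont[OF gpow_deriv[of t d]] t by simp
    thus "isCont ?P t" using HH_cont[OF t] by (intro continuous_intros)
  qed
  moreover have "{\<alpha>..pi-\<alpha>} \<noteq> {}" using \<alpha> pi3 by auto
  ultimately obtain tm where tm: "tm \<in> {\<alpha>..pi-\<alpha>}" "\<And>t. t \<in> {\<alpha>..pi-\<alpha>} \<Longrightarrow> ?P tm \<le> ?P t"
    using continuous_attains_inf[of "{\<alpha>..pi-\<alpha>}" ?P] by auto
  have mpos: "?P tm > 0" using tm(1) \<alpha> pi3 by (intro Ppos) auto
  define C where "C = min (min (l/4) 1) (?P tm)"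
  have Cpos: "C > 0" using mpos assms by (simp add: C_def)
  have c1: "c \<le> 1" by (simp add: c_def)
  show ?thesis
  proof (rule exI[of _ C], intro conjI allI impI Cpos)
    fix r t
    assume r: "l \<le> r" and t: "0 \<le> t" "t \<le> pi"
      and D1: "l\<^sup>2 \<le> r\<^sup>2 - 2 * r * cos t + 1" and D2: "l\<^sup>2 \<le> r\<^sup>2 + 2 * c * r * cos t + c\<^sup>2"
    show "C \<le> \<bar>r - cos (?h t)\<bar> \<or> 0 < t \<and> t < pi \<and> C \<le> ?P t"
    proof (cases "t \<le> \<alpha>")
      case True
      show ?thesis
      proof (rule ccontr)
        assume "\<not> ?thesis"
        hence lt: "\<bar>r - cos (?h t)\<bar> < C" by auto
        have hle: "0 \<le> ?h t" "?h t \<le> t" using gpow_le[OF t] by auto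
        have u1: "cos (?h t) \<le> 1" by simp
        have u2: "cos t \<le> cos (?h t)" by (rule cos_monotone_0_pi_le) (use hle t in auto)
        have ct: "\<bar>cos t - 1\<bar> < min (l/4) (l\<^sup>2/16)" using s3(2)[of t] True t \<alpha> by auto
        have q1: "\<bar>r - cos (?h t)\<bar> < l/4" using lt unfolding C_def by auto
        have q2: "1 - cos t < l/4" using ct by auto
        have "\<bar>r - 1\<bar> < l/2" using q1 q2 u1 u2 by arith
        hence sq: "(r - 1)\<^sup>2 < (l/2)\<^sup>2"
          by (metis abs_ge_zero power2_abs power_strict_mono zero_less_numeral)
        have "\<bar>r - cos (?h t)\<bar> < 1" using lt unfolding C_def by auto
        hence r2: "r \<le> 2" using u1 by arith
        have "2 * r * (1 - cos t) \<le> 2 * 2 * (1 - cos t)"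
          by (rule mult_right_mono) (use r2 in auto)
        moreover have "r\<^sup>2 - 2 * r * cos t + 1 = (r - 1)\<^sup>2 + 2 * r * (1 - cos t)"
          by (simp add: power2_eq_square algebra_simps)
        ultimately have "r\<^sup>2 - 2 * r * cos t + 1 < l\<^sup>2"
          using sq ct by (simp add: power_divide, linarith)
        thus False using D1 by simp
      qed
    next
      case False
      note F1 = False
      show ?thesis
      proof (cases "t \<ge> pi - \<alpha>")
        case True
        show ?thesis
        proof (rule ccontr)
          assume "\<not> ?thesis"
          hence lt: "\<bar>r - cos (?h t)\<bar> < C" by auto
          have u1: "cos (?h t) \<le> 1" by simp
          have cu: "\<bar>cos (?h t) - c\<bar> < l/4" using s1(2)[of t] True t \<alpha> by auto
          have ct: "\<bar>cos t + 1\<bar> < l\<^sup>2/16" using s2(2)[of t] True t \<alpha> by auto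
          have q1: "\<bar>r - cos (?h t)\<bar> < l/4" using lt unfolding C_def by auto
          have "\<bar>r - c\<bar> < l/2" using q1 cu by arith
          hence sq: "(r - c)\<^sup>2 < (l/2)\<^sup>2"
            by (metis abs_ge_zero power2_abs power_strict_mono zero_less_numeral)
          have "\<bar>r - cos (?h t)\<bar> < 1" using lt unfolding C_def by auto
        hence r2: "r \<le> 2" using u1 by arith
          have "1 + cos t \<ge> 0" using cos_ge_minus_one[of t] by linarith
          hence rp: "r * (1 + cos t) \<ge> 0" using r assms by simp
          have "2 * c * r * (1 + cos t) \<le> 2 * 1 * (r * (1 + cos t))"
            using mult_right_mono[OF c1 rp] by (simp add: algebra_simps)
          also have "\<dots> \<le> 2 * 2 * (1 + cos t)"
            using mult_right_mono[OF r2 \<open>1 + cos t \<ge> 0\<close>] by simp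
          finally have A: "2 * c * r * (1 + cos t) \<le> 4 * (1 + cos t)" by simp
          have "r\<^sup>2 + 2 * c * r * cos t + c\<^sup>2 = (r - c)\<^sup>2 + 2 * c * r * (1 + cos t)"
            by (simp add: power2_eq_square algebra_simps)
          hence "r\<^sup>2 + 2 * c * r * cos t + c\<^sup>2 < l\<^sup>2"
            using sq ct A by (simp add: power_divide, linarith)
          thus False using D2 by simp
        qed
      next
        case False
        hence "t \<in> {\<alpha>..pi-\<alpha>}" using F1 by auto
        hence "?P tm \<le> ?P t" by (rule tm(2))
        moreover have "0 < t" "t < pi" using F1 False \<alpha> by auto
        ultimately show ?thesis unfolding C_def by auto
      qed
    qed
  qed
qed



lemma sum_split0: "(n::nat) \<ge> 1 \<Longrightarrow> (\<Sum>i<n. F i) = F 0 + (\<Sum>i\<in>{1..<n}. F i)"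
proof -
  assume "n \<ge> 1"
  hence "{..<n} = insert 0 {1..<n}" by (auto simp: less_Suc_eq_le)
  thus ?thesis by simp
qed

lemma vnorm_split: "n \<ge> 1 \<Longrightarrow> vnorm n x = sqrt ((x 0)\<^sup>2 + (\<Sum>i\<in>{1..<n}. (x i)\<^sup>2))"
  unfolding vnorm_def by (simp add: sum_split0)

lemma vinner_e1: "n \<ge> 1 \<Longrightarrow> vinner n x e1 = x 0"
  unfolding vinner_def by (simp add: sum_split0 e1_def)

lemma vnorm_e1: "n \<ge> 1 \<Longrightarrow> vnorm n e1 = 1"
  unfolding vnorm_split by (simp add: vnorm_split e1_def)

lemma vnorm_scale: "vnorm n (\<lambda>i. t * v i) = \<bar>t\<bar> * vnorm n v"
proof -
  have "(\<Sum>i<n. (t * v i)\<^sup>2) = t\<^sup>2 * (\<Sum>i<n. (v i)\<^sup>2)"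
    by (simp add: sum_distrib_left power_mult_distrib)
  thus ?thesis unfolding vnorm_def by (simp add: real_sqrt_mult)
qed

lemma vinner_CS: "\<bar>vinner n G v\<bar> \<le> vnorm n G * vnorm n v"
proof -
  have "\<bar>vinner n G v\<bar> \<le> (\<Sum>i<n. \<bar>G i\<bar> * \<bar>v i\<bar>)"
    unfolding vinner_def by (metis (no_types, lifting) abs_mult sum.cong sum_abs)
  also have "\<dots> \<le> L2_set G {..<n} * L2_set v {..<n}" by (rule L2_set_mult_ineq)
  finally show ?thesis by (simp add: L2_set_def vnorm_def)
qed

lemma grad_dir:
  assumes gr: "has_grad n f x G" and x: "x \<in> Rn n" and v: "v \<in> Rn n" and N: "vnorm n v > 0"
  shows "((\<lambda>t. f (\<lambda>i. x i + t * v i)) has_real_derivative vinner n G v) (at 0)"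
proof -
  let ?N = "vnorm n v"
  let ?\<phi> = "\<lambda>t. f (\<lambda>i. x i + t * v i)"
  have phi0: "?\<phi> 0 = f x" by simp
  have "((\<lambda>t. (?\<phi> t - ?\<phi> 0) / (t - 0)) \<longlongrightarrow> vinner n G v) (at 0)"
    unfolding LIM_eq
  proof (intro allI impI)
    fix e :: real assume e: "e > 0"
    have "e / (2 * ?N) > 0" using e N by simp
    with gr obtain \<delta> where \<delta>: "\<delta> > 0" and H: "\<And>y. y \<in> Rn n \<Longrightarrow> vdist n y x < \<delta> \<Longrightarrow>
        \<bar>f y - f x - vinner n G (\<lambda>i. y i - x i)\<bar> \<le> e / (2 * ?N) * vdist n y x"
      unfolding has_grad_def by blast
    show "\<exists>s>0. \<forall>t. t \<noteq> 0 \<and> norm (t - 0) < s \<longrightarrow>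
        norm ((?\<phi> t - ?\<phi> 0) / (t - 0) - vinner n G v) < e"
    proof (intro exI[of _ "\<delta> / ?N"] conjI allI impI)
      show "\<delta> / ?N > 0" using \<delta> N by simp
      fix t :: real assume t: "t \<noteq> 0 \<and> norm (t - 0) < \<delta> / ?N"
      let ?y = "\<lambda>i. x i + t * v i"
      have yR: "?y \<in> Rn n" using x v by (simp add: Rn_def)
      have dist: "vdist n ?y x = \<bar>t\<bar> * ?N" unfolding vdist_def
        by (simp add: vnorm_scale)
      have "\<bar>t\<bar> * ?N < \<delta>" using t N by (simp add: pos_less_divide_eq)
      hence "vdist n ?y x < \<delta>" using dist by simp
      from H[OF yR this] have
        B: "\<bar>?\<phi> t - ?\<phi> 0 - vinner n G (\<lambda>i. ?y i - x i)\<bar> \<le> e / (2 * ?N) * (\<bar>t\<bar> * ?N)"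
        using dist by simp
      have inn: "vinner n G (\<lambda>i. ?y i - x i) = t * vinner n G v"
        unfolding vinner_def by (simp add: sum_distrib_left algebra_simps)
      have "e / (2 * ?N) * (\<bar>t\<bar> * ?N) = \<bar>t\<bar> * (e/2)" using N by (simp add: field_simps)
      hence B2: "\<bar>?\<phi> t - ?\<phi> 0 - t * vinner n G v\<bar> \<le> \<bar>t\<bar> * (e/2)" using B inn by simp
      have "(?\<phi> t - ?\<phi> 0) / t - vinner n G v = (?\<phi> t - ?\<phi> 0 - t * vinner n G v) / t"
        using t by (simp add: field_simps)
      hence "norm ((?\<phi> t - ?\<phi> 0) / (t - 0) - vinner n G v) = \<bar>?\<phi> t - ?\<phi> 0 - t * vinner n G v\<bar> / \<bar>t\<bar>"
        by (simp add: abs_divide)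
      also have "\<dots> \<le> e/2" using B2 t by (simp add: divide_le_eq mult.commute)
      also have "\<dots> < e" using e by simp
      finally show "norm ((?\<phi> t - ?\<phi> 0) / (t - 0) - vinner n G v) < e" .
    qed
  qed
  thus ?thesis by (simp add: has_field_derivative_iff)
qed



lemma radial_bound:
  assumes n: "n \<ge> 1" and x: "x \<in> Rn n" and gr: "has_grad n (L d n) x G"
    and r: "vnorm n x > 0"
  shows "\<bar>vnorm n x - cos ((g^^d) (theta n x))\<bar> \<le> vnorm n G"
proof -
  let ?r = "vnorm n x" and ?\<theta> = "theta n x"
  let ?u = "cos ((g^^d) ?\<theta>)"
  have D1: "((\<lambda>t. L d n (\<lambda>i. x i + t * x i)) has_real_derivative vinner n G x) (at 0)"
    by (rule grad_dir[OF gr x x r])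
  have eq: "L d n (\<lambda>i. x i + t * x i) = ((1 + t) * ?r)\<^sup>2 / 2 - (1 + t) * ?r * ?u + 1/2"
    if t: "t > -1" for t
  proof -
    have xe: "(\<lambda>i. x i + t * x i) = (\<lambda>i. (1 + t) * x i)" by (simp add: algebra_simps)
    have nv: "vnorm n (\<lambda>i. (1 + t) * x i) = (1 + t) * ?r" using t by (simp add: vnorm_scale)
    have ti: "theta n (\<lambda>i. (1 + t) * x i) = ?\<theta>"
      unfolding theta_def nv using t by (simp add: vinner_e1[OF n])
    show ?thesis unfolding xe L_def nv ti by simp
  qed
  have ev: "eventually (\<lambda>t. L d n (\<lambda>i. x i + t * x i) = ((1 + t) * ?r)\<^sup>2 / 2 - (1 + t) * ?r * ?u + 1/2) (nhds 0)"
  proof -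
    have "eventually (\<lambda>t. t \<in> {-1<..}) (nhds (0::real))"
      by (rule eventually_nhds_in_open) auto
    thus ?thesis by (rule eventually_mono) (use eq in auto)
  qed
  have D2: "((\<lambda>t. ((1 + t) * ?r)\<^sup>2 / 2 - (1 + t) * ?r * ?u + 1/2) has_real_derivative vinner n G x) (at 0)"
    using DERIV_cong_ev[OF refl ev refl] D1 by simp
  have D3: "((\<lambda>t. ((1 + t) * ?r)\<^sup>2 / 2 - (1 + t) * ?r * ?u + 1/2) has_real_derivative ?r * (?r - ?u)) (at 0)"
    by (auto intro!: derivative_eq_intros simp: algebra_simps power2_eq_square)
  have "vinner n G x = ?r * (?r - ?u)" using DERIV_unique[OF D2 D3] .
  hence "?r * \<bar>?r - ?u\<bar> \<le> vnorm n G * ?r" using vinner_CS[of n G x] r by (simp add: abs_mult)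
  thus ?thesis using r by (simp add: mult.commute)
qed

lemma angular_bound:
  assumes n: "n \<ge> 1" and x: "x \<in> Rn n" and gr: "has_grad n (L d n) x G"
    and r: "vnorm n x > 0" and th: "0 < theta n x" "theta n x < pi"
  shows "sin ((g^^d) (theta n x)) * HH d (theta n x) \<le> vnorm n G"
proof -
  define a where "a = x 0"
  define S1 where "S1 = (\<Sum>i\<in>{1..<n}. (x i)\<^sup>2)"
  define \<theta> where "\<theta> = theta n x"
  define rr where "rr = vnorm n x"
  have rr: "rr = sqrt (a\<^sup>2 + S1)" unfolding rr_def a_def S1_def by (rule vnorm_split[OF n])
  have S1nn: "S1 \<ge> 0" unfolding S1_def by (simp add: sum_nonneg)
  have rpos: "rr > 0" using r rr_def by simp
  have rr2: "rr\<^sup>2 = a\<^sup>2 + S1" using rr S1nn by simp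
  have ar: "\<bar>a\<bar> \<le> rr" unfolding rr using S1nn
    using real_sqrt_le_mono[of "a\<^sup>2" "a\<^sup>2 + S1"] by simp
  have tdef: "\<theta> = arccos (a / rr)"
    unfolding \<theta>_def theta_def rr_def a_def by (simp add: vinner_e1[OF n] vnorm_e1[OF n])
  have ab: "-1 \<le> a / rr" "a / rr \<le> 1" using ar rpos by (auto simp: divide_le_eq le_divide_eq abs_le_iff)
  have ct: "cos \<theta> = a / rr" using tdef ab by simp
  have t1: "0 < \<theta>" "\<theta> < pi" using th \<theta>_def by auto
  have "cos \<theta> < cos 0" by (rule cos_monotone_0_pi) (use t1 in auto)
  moreover have "cos pi < cos \<theta>" by (rule cos_monotone_0_pi) (use t1 in auto)
  ultimately have ab2: "-1 < a / rr" "a / rr < 1" using ct by auto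
  hence "\<bar>a\<bar> < rr" using rpos by (auto simp: divide_less_eq less_divide_eq abs_less_iff)
  hence "a\<^sup>2 < rr\<^sup>2" by (metis abs_ge_zero power2_abs power_strict_mono zero_less_numeral)
  hence S1pos: "S1 > 0" using rr2 by simp
  define s where "s = sqrt S1"
  have spos: "s > 0" using S1pos s_def by simp
  have s2: "s\<^sup>2 = S1" using S1nn s_def by simp
  define w where "w = (\<lambda>i. if i = 0 then - s else a / s * x i)"
  have wR: "w \<in> Rn n" using x n unfolding w_def Rn_def by auto
  have "(\<Sum>i\<in>{1..<n}. (w i)\<^sup>2) = (\<Sum>i\<in>{1..<n}. (a/s)\<^sup>2 * (x i)\<^sup>2)"
    by (rule sum.cong) (auto simp: w_def power_mult_distrib power_divide)
  also have "\<dots> = (a/s)\<^sup>2 * S1" unfolding S1_def by (simp add: sum_distrib_left)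
  finally have sumw: "(\<Sum>i\<in>{1..<n}. (w i)\<^sup>2) = (a/s)\<^sup>2 * S1" .
  have "vnorm n w = sqrt (s\<^sup>2 + (a/s)\<^sup>2 * S1)"
    unfolding vnorm_split[OF n] sumw by (simp add: w_def)
  also have "s\<^sup>2 + (a/s)\<^sup>2 * S1 = a\<^sup>2 + S1" using s2 spos S1pos by (simp add: field_simps)
  finally have wn: "vnorm n w = rr" using rr by simp
  define Rf where "Rf = (\<lambda>t::real. rr * sqrt (1 + t\<^sup>2))"
  define Q where "Q = (\<lambda>t::real. (a - t * s) / (rr * sqrt (1 + t\<^sup>2)))"
  define Cf where "Cf = (\<lambda>t. cos ((g^^d) (arccos (Q t))))"
  have eq: "L d n (\<lambda>i. x i + t * w i) = (Rf t)\<^sup>2 / 2 - Rf t * Cf t + 1/2" for t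
  proof -
    let ?y = "\<lambda>i. x i + t * w i"
    have "(\<Sum>i\<in>{1..<n}. (?y i)\<^sup>2) = (\<Sum>i\<in>{1..<n}. (1 + t * a / s)\<^sup>2 * (x i)\<^sup>2)"
    proof (rule sum.cong)
      fix i assume "i \<in> {1..<n}"
      hence "?y i = (1 + t * a / s) * x i" by (simp add: w_def algebra_simps)
      thus "(?y i)\<^sup>2 = (1 + t * a / s)\<^sup>2 * (x i)\<^sup>2" by (simp add: power_mult_distrib)
    qed simp
    also have "\<dots> = (1 + t * a / s)\<^sup>2 * S1" unfolding S1_def by (simp add: sum_distrib_left)
    finally have sy: "(\<Sum>i\<in>{1..<n}. (?y i)\<^sup>2) = (1 + t * a / s)\<^sup>2 * S1" .
    have alg: "(a - t * s)\<^sup>2 + (1 + t * a / s)\<^sup>2 * s\<^sup>2 = (a\<^sup>2 + s\<^sup>2) * (1 + t\<^sup>2)"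
      using spos by (simp add: field_simps power2_eq_square)
    have "vnorm n ?y = sqrt ((a - t * s)\<^sup>2 + (1 + t * a / s)\<^sup>2 * S1)"
      unfolding vnorm_split[OF n] sy by (simp add: w_def a_def)
    also have "\<dots> = sqrt ((a\<^sup>2 + S1) * (1 + t\<^sup>2))" using alg s2 by simp
    also have "\<dots> = Rf t" unfolding Rf_def rr by (simp add: real_sqrt_mult)
    finally have ny: "vnorm n ?y = Rf t" .
    have iy: "vinner n ?y e1 = a - t * s" by (simp add: vinner_e1[OF n] w_def a_def)
    have "theta n ?y = arccos (Q t)" unfolding theta_def ny iy Q_def Rf_def vnorm_e1[OF n] by simp
    thus ?thesis unfolding L_def ny Cf_def by simp
  qed
  have D1: "((\<lambda>t. L d n (\<lambda>i. x i + t * w i)) has_real_derivative vinner n G w) (at 0)"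
    by (rule grad_dir[OF gr x wR]) (use wn rpos in simp)
  have dR: "(Rf has_real_derivative 0) (at 0)"
    unfolding Rf_def by (auto intro!: derivative_eq_intros)
  have dQ: "(Q has_real_derivative (- s / rr)) (at 0)"
    unfolding Q_def using rpos by (auto intro!: derivative_eq_intros simp: field_simps)
  have Q0: "Q 0 = a / rr" by (simp add: Q_def)
  have sq: "sqrt (1 - (a / rr)\<^sup>2) = s / rr"
  proof -
    have "rr\<^sup>2 > 0" using rpos by simp
    hence "1 - (a / rr)\<^sup>2 = (rr\<^sup>2 - a\<^sup>2) / rr\<^sup>2" by (simp add: field_simps power_divide)
    also have "\<dots> = (s / rr)\<^sup>2" using rr2 s2 by (simp add: power_divide)
    finally have "1 - (a / rr)\<^sup>2 = (s / rr)\<^sup>2" .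
    thus ?thesis using spos rpos by simp
  qed
  have dA: "((\<lambda>t. arccos (Q t)) has_real_derivative 1) (at 0)"
  proof -
    have "((\<lambda>t. arccos (Q t)) has_real_derivative inverse (- sqrt (1 - (Q 0)\<^sup>2)) * (- s / rr)) (at 0)"
      by (rule DERIV_chain2[OF DERIV_arccos dQ]) (use ab2 Q0 in auto)
    also have "inverse (- sqrt (1 - (Q 0)\<^sup>2)) * (- s / rr) = 1"
      unfolding Q0 sq using spos rpos by (simp add: field_simps)
    finally show ?thesis .
  qed
  have A0: "arccos (Q 0) = \<theta>" using Q0 tdef by simp
  have dH: "((\<lambda>t. (g^^d) (arccos (Q t))) has_real_derivative HH d \<theta> * 1) (at 0)"
    by (rule DERIV_chain2[OF _ dA]) (use gpow_deriv[of \<theta> d] t1 A0 in auto)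
  have dC: "(Cf has_real_derivative (- sin ((g^^d) \<theta>) * HH d \<theta>)) (at 0)"
    unfolding Cf_def using DERIV_chain2[OF DERIV_cos dH] A0 by simp
  have C0: "Cf 0 = cos ((g^^d) \<theta>)" by (simp add: Cf_def A0)
  have R0: "Rf 0 = rr" by (simp add: Rf_def)
  have D2: "((\<lambda>t. (Rf t)\<^sup>2 / 2 - Rf t * Cf t + 1/2) has_real_derivative
       rr * (sin ((g^^d) \<theta>) * HH d \<theta>)) (at 0)"
    using dR dC by (auto intro!: derivative_eq_intros simp: R0 C0)
  have D1': "((\<lambda>t. (Rf t)\<^sup>2 / 2 - Rf t * Cf t + 1/2) has_real_derivative vinner n G w) (at 0)"
    using D1 eq by simp
  have "vinner n G w = rr * (sin ((g^^d) \<theta>) * HH d \<theta>)" using DERIV_unique[OF D1' D2] .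
  moreover have "0 < (g^^d) \<theta>" "(g^^d) \<theta> < pi" using gpow_bounds'[OF t1] by auto
  hence "sin ((g^^d) \<theta>) * HH d \<theta> > 0" using HH_pos[OF t1] by (simp add: sin_gt_zero)
  ultimately have "rr * (sin ((g^^d) \<theta>) * HH d \<theta>) \<le> vnorm n G * rr"
    using vinner_CS[of n G w] wn by simp
  thus ?thesis using rpos unfolding \<theta>_def by (simp add: mult.commute)
qed

theorem mainTheorem5:
  fixes d :: nat and l :: real
  assumes "d \<ge> 1" and "l > 0"
  shows "\<exists>C>0. \<forall>n\<ge>1. \<forall>x\<in>Rn n.
           vdist n x (\<lambda>i. 0) \<ge> l \<and> vdist n x e1 \<ge> l \<and>
           vdist n x (\<lambda>i. - cos ((g ^^ d) pi) * e1 i) \<ge> l \<and>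
           differentiable_Rn n (L d n) x \<longrightarrow>
           (\<forall>G. has_grad n (L d n) x G \<longrightarrow> vnorm n G \<ge> C)"
proof -
  define c where "c = cos ((g ^^ d) pi)"
  obtain C where Cpos: "C > 0" and KC: "\<And>r t. r \<ge> l \<Longrightarrow> 0 \<le> t \<Longrightarrow> t \<le> pi \<Longrightarrow>
     r\<^sup>2 - 2 * r * cos t + 1 \<ge> l\<^sup>2 \<Longrightarrow> r\<^sup>2 + 2 * c * r * cos t + c\<^sup>2 \<ge> l\<^sup>2 \<Longrightarrow>
     (\<bar>r - cos ((g^^d) t)\<bar> \<ge> C \<or> (0 < t \<and> t < pi \<and> sin ((g^^d) t) * HH d t \<ge> C))"
    using key2d[OF assms(2), of d] unfolding c_def by blast
  show ?thesis
  proof (rule exI[of _ C], intro conjI allI impI ballI Cpos)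
    fix n :: nat and x G
    assume n: "1 \<le> n" and x: "x \<in> Rn n"
      and H: "l \<le> vdist n x (\<lambda>i. 0) \<and> l \<le> vdist n x e1 \<and>
           l \<le> vdist n x (\<lambda>i. - cos ((g ^^ d) pi) * e1 i) \<and> differentiable_Rn n (L d n) x"
      and gr: "has_grad n (L d n) x G"
    define a where "a = x 0"
    define S1 where "S1 = (\<Sum>i\<in>{1..<n}. (x i)\<^sup>2)"
    define r where "r = vnorm n x"
    define \<theta> where "\<theta> = theta n x"
    have rr: "r = sqrt (a\<^sup>2 + S1)" unfolding r_def a_def S1_def by (rule vnorm_split[OF n])
    have S1nn: "S1 \<ge> 0" unfolding S1_def by (simp add: sum_nonneg)
    have rl: "l \<le> r" using H unfolding r_def vdist_def by simp
    hence rpos: "r > 0" using assms by simp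
    have rr2: "r\<^sup>2 = a\<^sup>2 + S1" using rr S1nn by simp
    have ar: "\<bar>a\<bar> \<le> r" unfolding rr using S1nn
      using real_sqrt_le_mono[of "a\<^sup>2" "a\<^sup>2 + S1"] by simp
    have tdef: "\<theta> = arccos (a / r)"
      unfolding \<theta>_def theta_def r_def a_def by (simp add: vinner_e1[OF n] vnorm_e1[OF n])
    have ab: "-1 \<le> a / r" "a / r \<le> 1" using ar rpos by (auto simp: divide_le_eq le_divide_eq abs_le_iff)
    have ct: "cos \<theta> = a / r" using tdef ab by simp
    have acos: "r * cos \<theta> = a" using ct rpos by simp
    have tb: "0 \<le> \<theta>" "\<theta> \<le> pi" using arccos_bounded[OF ab] tdef by auto
    have sqge: "l\<^sup>2 \<le> (vdist n x v)\<^sup>2" if "l \<le> vdist n x v" for v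
      using power_mono[OF that, of 2] assms by simp
    have vd: "(vdist n x v)\<^sup>2 = (a - v 0)\<^sup>2 + S1" if "\<And>i. i \<ge> 1 \<Longrightarrow> v i = 0" for v
    proof -
      have "(\<Sum>i\<in>{1..<n}. (x i - v i)\<^sup>2) = S1" unfolding S1_def
        by (rule sum.cong) (use that in auto)
      moreover have "(x 0 - v 0)\<^sup>2 + S1 \<ge> 0" using S1nn by simp
      ultimately show ?thesis unfolding vdist_def vnorm_split[OF n] a_def by simp
    qed
    have "l\<^sup>2 \<le> (a - 1)\<^sup>2 + S1"
      using sqge[of e1] vd[of e1] H by (simp add: e1_def)
    hence D1: "l\<^sup>2 \<le> r\<^sup>2 - 2 * r * cos \<theta> + 1"
      using rr2 acos by (simp add: power2_eq_square algebra_simps)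
    have "l\<^sup>2 \<le> (a + c)\<^sup>2 + S1"
      using sqge[of "\<lambda>i. - cos ((g ^^ d) pi) * e1 i"] vd[of "\<lambda>i. - cos ((g ^^ d) pi) * e1 i"] H
      by (simp add: e1_def c_def)
    hence D2: "l\<^sup>2 \<le> r\<^sup>2 + 2 * c * r * cos \<theta> + c\<^sup>2"
    proof -
      have "(a + c)\<^sup>2 + S1 = r\<^sup>2 + 2 * c * (r * cos \<theta>) + c\<^sup>2"
        unfolding acos rr2 by (simp add: power2_eq_square algebra_simps)
      thus ?thesis using \<open>l\<^sup>2 \<le> (a + c)\<^sup>2 + S1\<close> by (simp add: algebra_simps)
    qed
    from KC[OF rl tb D1 D2] show "C \<le> vnorm n G"
    proof
      assume "C \<le> \<bar>r - cos ((g ^^ d) \<theta>)\<bar>"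
      moreover have "\<bar>r - cos ((g ^^ d) \<theta>)\<bar> \<le> vnorm n G"
        unfolding r_def \<theta>_def by (rule radial_bound[OF n x gr]) (use rpos r_def in simp)
      ultimately show ?thesis by simp
    next
      assume A: "0 < \<theta> \<and> \<theta> < pi \<and> C \<le> sin ((g ^^ d) \<theta>) * HH d \<theta>"
      moreover have "sin ((g ^^ d) \<theta>) * HH d \<theta> \<le> vnorm n G"
        unfolding \<theta>_def by (rule angular_bound[OF n x gr]) (use rpos r_def A \<theta>_def in auto)
      ultimately show ?thesis by simp
    qed
  qed
qed

end
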